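(* Let $(\mathbb R^2,0)\xrightarrow{\gamma_1}(\mathbb R^2,0)\xleftarrow{\gamma_2}(\mathbb R^2,0)$ be a pair of $C^\infty$ map germs such that $\gamma_1,\gamma_2$ are both fold map germs and the discriminant sets $\gamma_1(S_{\gamma_1})$, $\gamma_2(S_{\gamma_2})$ are transversal at $0$. Then there exist smooth coordinate systems in the two source spaces and in the common target space in which $\gamma_1(x_1,y_1)=(x_1,y_1^2)$ and $\gamma_2(x_2,y_2)=(x_2^2,y_2)$.
   Context: $S_g$ denotes the singular set of a map germ $g$. *)

theory Defs
  imports "HOL-Analysis.Analysis"
begin

type_synonym R2 = "real \<times> real"

fun Ck_on :: "nat \<Rightarrow> 'a::euclidean_space set \<Rightarrow> ('a \<Rightarrow> 'b::real_normed_vector) \<Rightarrow> bool" where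
  "Ck_on 0 S f = continuous_on S f"
| "Ck_on (Suc k) S f = ((\<forall>x\<in>S. f differentiable (at x)) \<and>
      (\<forall>v. Ck_on k S (\<lambda>x. frechet_derivative f (at x) v)))"

definition smooth_on :: "'a::euclidean_space set \<Rightarrow> ('a \<Rightarrow> 'b::real_normed_vector) \<Rightarrow> bool" where
  "smooth_on S f \<longleftrightarrow> (\<forall>k. Ck_on k S f)"

definition map_germ :: "(R2 \<Rightarrow> R2) \<Rightarrow> bool" where
  "map_germ f \<longleftrightarrow> f 0 = 0 \<and> (\<exists>U. open U \<and> 0 \<in> U \<and> smooth_on U f)"

definition diffeo_germ :: "(R2 \<Rightarrow> R2) \<Rightarrow> bool" where
  "diffeo_germ \<phi> \<longleftrightarrow> \<phi> 0 = 0 \<and>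
     (\<exists>U V \<psi>. open U \<and> open V \<and> 0 \<in> U \<and> \<phi> ` U = V \<and> smooth_on U \<phi> \<and> smooth_on V \<psi> \<and>
        (\<forall>x\<in>U. \<psi> (\<phi> x) = x) \<and> (\<forall>y\<in>V. \<phi> (\<psi> y) = y))"

definition fold_x :: "R2 \<Rightarrow> R2" where
  "fold_x p = (fst p, (snd p)^2)"

definition fold_y :: "R2 \<Rightarrow> R2" where
  "fold_y p = ((fst p)^2, snd p)"

definition A_equivalent :: "(R2 \<Rightarrow> R2) \<Rightarrow> (R2 \<Rightarrow> R2) \<Rightarrow> bool" where
  "A_equivalent f g \<longleftrightarrow> (\<exists>\<phi> \<psi>. diffeo_germ \<phi> \<and> diffeo_germ \<psi> \<and>
      (\<forall>\<^sub>F p in nhds 0. \<psi> (f p) = g (\<phi> p)))"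

definition fold_germ :: "(R2 \<Rightarrow> R2) \<Rightarrow> bool" where
  "fold_germ f \<longleftrightarrow> map_germ f \<and> A_equivalent f fold_x"

definition singular_set :: "(R2 \<Rightarrow> R2) \<Rightarrow> R2 set \<Rightarrow> R2 set" where
  "singular_set f U = {p \<in> U. dim (range (frechet_derivative f (at p))) < DIM(R2)}"

definition tangent_cone0 :: "R2 set \<Rightarrow> R2 set" where
  "tangent_cone0 D = {v. \<exists>x t. (\<forall>n. x n \<in> D \<and> t n > 0) \<and> t \<longlonglongrightarrow> 0 \<and>
       (\<lambda>n. (1 / t n) *\<^sub>R x n) \<longlonglongrightarrow> v}"

text \<open>Transversality at 0 of the discriminant germs g1(S_g1), g2(S_g2): for all
  (sufficiently small) neighbourhoods of 0 the tangent cones at 0 of the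
  discriminants span R^2, i.e. T_0 D1 + T_0 D2 = R^2.\<close>
definition discriminants_transversal :: "(R2 \<Rightarrow> R2) \<Rightarrow> (R2 \<Rightarrow> R2) \<Rightarrow> bool" where
  "discriminants_transversal g1 g2 \<longleftrightarrow>
     (\<exists>U0. open U0 \<and> 0 \<in> U0 \<and> smooth_on U0 g1 \<and> smooth_on U0 g2 \<and>
       (\<forall>U1 U2. open U1 \<and> open U2 \<and> 0 \<in> U1 \<and> 0 \<in> U2 \<and> U1 \<subseteq> U0 \<and> U2 \<subseteq> U0 \<longrightarrow>
          {u + v | u v. u \<in> tangent_cone0 (g1 ` singular_set g1 U1) \<and>
                        v \<in> tangent_cone0 (g2 ` singular_set g2 U2)} = UNIV))"

end

theory Submission
  imports Defs
begin

lemma frechet_cong: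
  assumes "open S" "x \<in> S" "\<And>y. y \<in> S \<Longrightarrow> f y = g y" "f differentiable (at x)"
  shows "g differentiable (at x)" "frechet_derivative g (at x) = frechet_derivative f (at x)"
proof -
  have "(f has_derivative frechet_derivative f (at x)) (at x)"
    using assms(4) frechet_derivative_works by blast
  then have d: "(g has_derivative frechet_derivative f (at x)) (at x)"
    using has_derivative_transform_within_open[of f _ x UNIV S g] assms by blast
  then show "g differentiable (at x)" using differentiableI by blast
  show "frechet_derivative g (at x) = frechet_derivative f (at x)"
    using d frechet_derivative_at by metis
qed

lemma Ck_on_cong:
  assumes "open S" "\<And>x. x \<in> S \<Longrightarrow> f x = g x" "Ck_on k S f"
  shows "Ck_on k S g"
  using assms
proof (induction k arbitrary: f g)
  case 0
  then show ?case using continuous_on_cong by (metis Ck_on.simps(1))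
next
  case (Suc k)
  have d: "\<forall>x\<in>S. f differentiable (at x)" and c: "\<And>v. Ck_on k S (\<lambda>x. frechet_derivative f (at x) v)"
    using Suc.prems by auto
  show ?case
    unfolding Ck_on.simps
  proof (intro conjI allI ballI)
    fix x assume "x \<in> S" then show "g differentiable (at x)"
      using frechet_cong(1)[of S x f g] Suc.prems d by blast
  next
    fix v
    show "Ck_on k S (\<lambda>x. frechet_derivative g (at x) v)"
      using Suc.IH[OF Suc.prems(1) _ c[of v]] frechet_cong(2)[OF Suc.prems(1) _ Suc.prems(2)] d
      by simp
  qed
qed

lemma Ck_on_cong':
  assumes "open S" "Ck_on k S g" "\<And>x. x \<in> S \<Longrightarrow> f x = g x"
  shows "Ck_on k S f"
  using Ck_on_cong[of S g f k] assms by metis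

lemma Ck_on_Suc_imp: "Ck_on (Suc k) S f \<Longrightarrow> Ck_on k S f"
proof (induction k arbitrary: f)
  case 0
  then show ?case
    by (auto intro!: continuous_at_imp_continuous_on differentiable_imp_continuous_within)
next
  case (Suc k)
  then show ?case by auto
qed

lemma Ck_on_le: "m \<le> k \<Longrightarrow> Ck_on k S f \<Longrightarrow> Ck_on m S f"
proof (induction k rule: dec_induct)
  case base then show ?case .
next
  case (step n) then show ?case using Ck_on_Suc_imp by blast
qed

lemma Ck_const: "Ck_on k S (\<lambda>x. c)"
  by (induction k arbitrary: c) auto

lemma Ck_linear:
  assumes "bounded_linear L" shows "Ck_on k S L"
proof (induction k)
  case 0 then show ?case using assms linear_continuous_on by auto
next
  case (Suc k)
  have "frechet_derivative L (at x) = L" for x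
    using assms bounded_linear_imp_has_derivative frechet_derivative_at by metis
  then show ?case using assms by (auto simp: Ck_const intro: bounded_linear_imp_differentiable)
qed

lemma Ck_add:
  assumes "open S" "Ck_on k S f" "Ck_on k S g"
  shows "Ck_on k S (\<lambda>x. f x + g x)"
  using assms(2,3)
proof (induction k arbitrary: f g)
  case 0 then show ?case by (auto intro: continuous_on_add)
next
  case (Suc k)
  have D: "((\<lambda>x. f x + g x) has_derivative (\<lambda>v. frechet_derivative f (at x) v + frechet_derivative g (at x) v)) (at x)"
    if "x \<in> S" for x
    using Suc.prems that by (auto intro!: has_derivative_add simp: frechet_derivative_works[symmetric])
  show ?case unfolding Ck_on.simps
  proof (intro conjI allI ballI)
    fix x assume "x \<in> S" then show "(\<lambda>x. f x + g x) differentiable (at x)"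
      using D differentiableI by blast
  next
    fix v
    have eq: "frechet_derivative (\<lambda>x. f x + g x) (at x) v = frechet_derivative f (at x) v + frechet_derivative g (at x) v"
      if "x \<in> S" for x
      by (simp add: frechet_derivative_at[OF D[OF that], symmetric])
    have c: "Ck_on k S (\<lambda>x. frechet_derivative f (at x) v + frechet_derivative g (at x) v)"
      using Suc.IH[of "\<lambda>x. frechet_derivative f (at x) v" "\<lambda>x. frechet_derivative g (at x) v"] Suc.prems
      by simp
    show "Ck_on k S (\<lambda>x. frechet_derivative (\<lambda>x. f x + g x) (at x) v)"
      by (rule Ck_on_cong'[OF assms(1) c]) (simp add: eq)
  qed
qed

lemma Ck_linear_comp:
  assumes "open S" "Ck_on k S f" "bounded_linear L"
  shows "Ck_on k S (\<lambda>x. L (f x))"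
  using assms(2)
proof (induction k arbitrary: f)
  case 0 then show ?case using assms(3) linear_continuous_on continuous_on_compose2[of UNIV L S f]
    by auto
next
  case (Suc k)
  have D: "((\<lambda>x. L (f x)) has_derivative (\<lambda>v. L (frechet_derivative f (at x) v))) (at x)"
    if "x \<in> S" for x
  proof -
    have "(f has_derivative frechet_derivative f (at x)) (at x)"
      using Suc.prems that by (auto simp flip: frechet_derivative_works)
    then show ?thesis by (rule bounded_linear.has_derivative[OF assms(3)])
  qed
  show ?case unfolding Ck_on.simps
  proof (intro conjI allI ballI)
    fix x assume "x \<in> S" then show "(\<lambda>x. L (f x)) differentiable (at x)"
      using D differentiableI by blast
  next
    fix v
    have eq: "frechet_derivative (\<lambda>x. L (f x)) (at x) v = L (frechet_derivative f (at x) v)"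
      if "x \<in> S" for x
      by (simp add: frechet_derivative_at[OF D[OF that], symmetric])
    have c: "Ck_on k S (\<lambda>x. L (frechet_derivative f (at x) v))"
      using Suc.IH[of "\<lambda>x. frechet_derivative f (at x) v"] Suc.prems
      by simp
    show "Ck_on k S (\<lambda>x. frechet_derivative (\<lambda>x. L (f x)) (at x) v)"
      by (rule Ck_on_cong'[OF assms(1) c]) (simp add: eq)
  qed
qed

lemma Ck_bilinear:
  assumes "open S" "bounded_bilinear B" "Ck_on k S f" "Ck_on k S g"
  shows "Ck_on k S (\<lambda>x. B (f x) (g x))"
  using assms(3,4)
proof (induction k arbitrary: f g)
  case 0
  then have "continuous_on S f" "continuous_on S g" by simp_all
  then show ?case unfolding Ck_on.simps by (rule bounded_bilinear.continuous_on[OF assms(2)])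
next
  case (Suc k)
  have D: "((\<lambda>x. B (f x) (g x)) has_derivative (\<lambda>v. B (f x) (frechet_derivative g (at x) v) + B (frechet_derivative f (at x) v) (g x))) (at x)"
    if "x \<in> S" for x
  proof -
    have "(f has_derivative frechet_derivative f (at x)) (at x)"
      "(g has_derivative frechet_derivative g (at x)) (at x)"
      using Suc.prems that by (auto simp flip: frechet_derivative_works)
    then show ?thesis by (rule bounded_bilinear.FDERIV[OF assms(2)])
  qed
  show ?case unfolding Ck_on.simps
  proof (intro conjI allI ballI)
    fix x assume "x \<in> S" then show "(\<lambda>x. B (f x) (g x)) differentiable (at x)"
      using D differentiableI by blast
  next
    fix v
    have eq: "frechet_derivative (\<lambda>x. B (f x) (g x)) (at x) v =
        B (f x) (frechet_derivative g (at x) v) + B (frechet_derivative f (at x) v) (g x)"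
      if "x \<in> S" for x
      by (simp add: frechet_derivative_at[OF D[OF that], symmetric])
    have f: "Ck_on k S f" "Ck_on k S (\<lambda>x. frechet_derivative f (at x) v)"
      using Suc.prems(1) Ck_on_Suc_imp[of k S f] by auto
    have g: "Ck_on k S g" "Ck_on k S (\<lambda>x. frechet_derivative g (at x) v)"
      using Suc.prems(2) Ck_on_Suc_imp[of k S g] by auto
    have c: "Ck_on k S (\<lambda>x. B (f x) (frechet_derivative g (at x) v) + B (frechet_derivative f (at x) v) (g x))"
      by (rule Ck_add[OF assms(1) Suc.IH[OF f(1) g(2)] Suc.IH[OF f(2) g(1)]])
    show "Ck_on k S (\<lambda>x. frechet_derivative (\<lambda>x. B (f x) (g x)) (at x) v)"
      by (rule Ck_on_cong'[OF assms(1) c]) (simp add: eq)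
  qed
qed

lemma Ck_pair:
  assumes "open S" "Ck_on k S f" "Ck_on k S g"
  shows "Ck_on k S (\<lambda>x. (f x, g x))"
  using assms(2,3)
proof (induction k arbitrary: f g)
  case 0
  then have "continuous_on S f" "continuous_on S g" by simp_all
  then show ?case unfolding Ck_on.simps by (rule continuous_on_Pair)
next
  case (Suc k)
  have D: "((\<lambda>x. (f x, g x)) has_derivative (\<lambda>v. (frechet_derivative f (at x) v, frechet_derivative g (at x) v))) (at x)"
    if "x \<in> S" for x
  proof -
    have "(f has_derivative frechet_derivative f (at x)) (at x)"
      "(g has_derivative frechet_derivative g (at x)) (at x)"
      using Suc.prems that by (auto simp flip: frechet_derivative_works)
    then show ?thesis by (rule has_derivative_Pair)
  qed
  show ?case unfolding Ck_on.simps
  proof (intro conjI allI ballI)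
    fix x assume "x \<in> S" then show "(\<lambda>x. (f x, g x)) differentiable (at x)"
      using D differentiableI by blast
  next
    fix v
    have eq: "frechet_derivative (\<lambda>x. (f x, g x)) (at x) v = (frechet_derivative f (at x) v, frechet_derivative g (at x) v)"
      if "x \<in> S" for x
      by (simp add: frechet_derivative_at[OF D[OF that], symmetric])
    have c: "Ck_on k S (\<lambda>x. (frechet_derivative f (at x) v, frechet_derivative g (at x) v))"
      using Suc.prems by (intro Suc.IH) simp_all
    show "Ck_on k S (\<lambda>x. frechet_derivative (\<lambda>x. (f x, g x)) (at x) v)"
      by (rule Ck_on_cong'[OF assms(1) c]) (simp add: eq)
  qed
qed

lemma Ck_sum:
  assumes "open S" "finite I" "\<And>i. i \<in> I \<Longrightarrow> Ck_on k S (f i)"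
  shows "Ck_on k S (\<lambda>x. \<Sum>i\<in>I. f i x)"
  using assms(2,3)
proof (induction I rule: finite_induct)
  case empty then show ?case by (simp add: Ck_const)
next
  case (insert i I)
  then show ?case by (simp add: Ck_add[OF assms(1)])
qed

lemma Ck_scaleR:
  assumes "open S" "Ck_on k S f" "Ck_on k S g"
  shows "Ck_on k S (\<lambda>x. f x *\<^sub>R g x)"
  by (rule Ck_bilinear[OF assms(1) bounded_bilinear_scaleR assms(2,3)])

lemma Ck_mult:
  fixes f g :: "'a::euclidean_space \<Rightarrow> real"
  assumes "open S" "Ck_on k S f" "Ck_on k S g"
  shows "Ck_on k S (\<lambda>x. f x * g x)"
  by (rule Ck_bilinear[OF assms(1) bounded_bilinear_mult assms(2,3)])

lemma Ck_inner_const: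
  assumes "open S" "Ck_on k S f"
  shows "Ck_on k S (\<lambda>x. f x \<bullet> b)"
  by (rule Ck_linear_comp[OF assms(1,2) bounded_linear_inner_left])

lemma Ck_fst:
  assumes "open S" "Ck_on k S f"
  shows "Ck_on k S (\<lambda>x. fst (f x))"
  by (rule Ck_linear_comp[OF assms(1,2) bounded_linear_fst])

lemma Ck_snd:
  assumes "open S" "Ck_on k S f"
  shows "Ck_on k S (\<lambda>x. snd (f x))"
  by (rule Ck_linear_comp[OF assms(1,2) bounded_linear_snd])

lemma Ck_uminus:
  assumes "open S" "Ck_on k S f"
  shows "Ck_on k S (\<lambda>x. - f x)"
  by (rule Ck_linear_comp[OF assms(1,2) bounded_linear_minus[OF bounded_linear_ident]])

lemma Ck_diff:
  assumes "open S" "Ck_on k S f" "Ck_on k S g"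
  shows "Ck_on k S (\<lambda>x. f x - g x)"
  using Ck_add[OF assms(1,2) Ck_uminus[OF assms(1,3)]] by simp

lemma linear_basis_expand:
  fixes L :: "'a::euclidean_space \<Rightarrow> 'b::real_normed_vector"
  assumes "linear L"
  shows "L w = (\<Sum>b\<in>Basis. (w \<bullet> b) *\<^sub>R L b)"
proof -
  have "L w = L (\<Sum>b\<in>Basis. (w \<bullet> b) *\<^sub>R b)" by (simp add: euclidean_representation)
  also have "\<dots> = (\<Sum>b\<in>Basis. (w \<bullet> b) *\<^sub>R L b)"
    by (simp add: linear_sum[OF assms] linear_cmul[OF assms])
  finally show ?thesis .
qed

lemma Ck_comp:
  assumes "open S" "Ck_on k S f" "f ` S \<subseteq> T" "Ck_on k T g"
  shows "Ck_on k S (\<lambda>x. g (f x))"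
  using assms(2,4)
proof (induction k arbitrary: g)
  case 0
  then have a: "continuous_on S f" and b: "continuous_on T g" by simp_all
  show ?case using continuous_on_compose2[OF b a assms(3)] by simp
next
  case (Suc k)
  have D: "((\<lambda>x. g (f x)) has_derivative (\<lambda>v. frechet_derivative g (at (f x)) (frechet_derivative f (at x) v))) (at x)"
    if "x \<in> S" for x
  proof -
    have "(f has_derivative frechet_derivative f (at x)) (at x)"
      "(g has_derivative frechet_derivative g (at (f x))) (at (f x))"
      using Suc.prems that assms(3) by (auto simp flip: frechet_derivative_works)
    then show ?thesis by (rule has_derivative_compose)
  qed
  show ?case unfolding Ck_on.simps
  proof (intro conjI allI ballI)
    fix x assume "x \<in> S" then show "(\<lambda>x. g (f x)) differentiable (at x)"
      using D differentiableI by blast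
  next
    fix v
    have eq: "frechet_derivative (\<lambda>x. g (f x)) (at x) v =
      (\<Sum>b\<in>Basis. (frechet_derivative f (at x) v \<bullet> b) *\<^sub>R frechet_derivative g (at (f x)) b)"
      if "x \<in> S" for x
    proof -
      have lin: "linear (frechet_derivative g (at (f x)))"
        using Suc.prems that assms(3) by (intro linear_frechet_derivative) auto
      have "frechet_derivative (\<lambda>x. g (f x)) (at x) v = frechet_derivative g (at (f x)) (frechet_derivative f (at x) v)"
        by (simp add: frechet_derivative_at[OF D[OF that], symmetric])
      also have "\<dots> = (\<Sum>b\<in>Basis. (frechet_derivative f (at x) v \<bullet> b) *\<^sub>R frechet_derivative g (at (f x)) b)"
        by (rule linear_basis_expand[OF lin])
      finally show ?thesis .
    qed
    have f: "Ck_on k S f" "Ck_on k S (\<lambda>x. frechet_derivative f (at x) v)"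
      using Suc.prems(1) Ck_on_Suc_imp[of k S f] by auto
    have g: "Ck_on k T (\<lambda>y. frechet_derivative g (at y) b)" for b
      using Suc.prems(2) by auto
    have c: "Ck_on k S (\<lambda>x. \<Sum>b\<in>Basis. (frechet_derivative f (at x) v \<bullet> b) *\<^sub>R frechet_derivative g (at (f x)) b)"
      by (intro Ck_sum assms(1) finite_Basis Ck_scaleR Ck_inner_const f(2) Suc.IH[OF f(1) g])
    show "Ck_on k S (\<lambda>x. frechet_derivative (\<lambda>x. g (f x)) (at x) v)"
      by (rule Ck_on_cong'[OF assms(1) c]) (simp add: eq)
  qed
qed

lemma Ck_inverse:
  fixes h :: "'a::euclidean_space \<Rightarrow> real"
  assumes "open S" "Ck_on k S h" "\<And>x. x \<in> S \<Longrightarrow> h x \<noteq> 0"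
  shows "Ck_on k S (\<lambda>x. inverse (h x))"
  using assms(2)
proof (induction k)
  case 0
  then have "continuous_on S h" by simp_all
  then show ?case using continuous_on_inverse[of S h] assms(3) by auto
next
  case (Suc k)
  have D: "((\<lambda>x. inverse (h x)) has_derivative (\<lambda>v. - (inverse (h x) * frechet_derivative h (at x) v * inverse (h x)))) (at x)"
    if "x \<in> S" for x
  proof -
    have "(h has_derivative frechet_derivative h (at x)) (at x)"
      using Suc.prems that by (auto simp flip: frechet_derivative_works)
    then show ?thesis by (rule Deriv.has_derivative_inverse[of h x, OF assms(3)[OF that]])
  qed
  show ?case unfolding Ck_on.simps
  proof (intro conjI allI ballI)
    fix x assume "x \<in> S" then show "(\<lambda>x. inverse (h x)) differentiable (at x)"
      using D differentiableI by blast
  next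
    fix v
    have eq: "frechet_derivative (\<lambda>x. inverse (h x)) (at x) v = - (inverse (h x) * frechet_derivative h (at x) v * inverse (h x))"
      if "x \<in> S" for x
      by (simp add: frechet_derivative_at[OF D[OF that], symmetric])
    have f: "Ck_on k S h" "Ck_on k S (\<lambda>x. frechet_derivative h (at x) v)"
      using Suc.prems(1) Ck_on_Suc_imp[of k S h] by auto
    have c: "Ck_on k S (\<lambda>x. - (inverse (h x) * frechet_derivative h (at x) v * inverse (h x)))"
      by (intro Ck_uminus Ck_mult assms(1) f Suc.IH)
    show "Ck_on k S (\<lambda>x. frechet_derivative (\<lambda>x. inverse (h x)) (at x) v)"
      by (rule Ck_on_cong'[OF assms(1) c]) (simp add: eq)
  qed
qed



lemma lin2_expand:
  fixes L :: "R2 \<Rightarrow> R2"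
  assumes "linear L"
  shows "L v = (fst (L (1,0)) * fst v + fst (L (0,1)) * snd v, snd (L (1,0)) * fst v + snd (L (0,1)) * snd v)"
proof -
  have "v = fst v *\<^sub>R (1,0) + snd v *\<^sub>R (0,1)" by (cases v) simp
  then have "L v = L (fst v *\<^sub>R (1,0)) + L (snd v *\<^sub>R (0,1))"
    using linear_add[OF assms] by metis
  then have "L v = fst v *\<^sub>R L (1,0) + snd v *\<^sub>R L (0,1)"
    by (simp only: linear_cmul[OF assms])
  then show ?thesis by (simp add: prod_eq_iff mult.commute)
qed

lemma cramer2:
  fixes L :: "R2 \<Rightarrow> R2"
  assumes lin: "linear L" and inj: "inj L"
  defines "a \<equiv> fst (L (1,0))" and "c \<equiv> snd (L (1,0))" and "b \<equiv> fst (L (0,1))" and "d \<equiv> snd (L (0,1))"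
  shows "a*d - b*c \<noteq> 0"
    and "inv L w = ((d * fst w - b * snd w) / (a*d - b*c), (a * snd w - c * fst w) / (a*d - b*c))"
proof -
  have Lx: "L v = (a * fst v + b * snd v, c * fst v + d * snd v)" for v
    using lin2_expand[OF lin, of v] unfolding a_def b_def c_def d_def .
  have L0: "L 0 = 0" using lin linear_0 by blast
  show det: "a*d - b*c \<noteq> 0"
  proof
    assume h: "a*d - b*c = 0"
    have "L (d, -c) = (a*d - b*c, 0)" by (simp add: Lx algebra_simps)
    also have "\<dots> = L 0" using h L0 by (simp add: zero_prod_def)
    finally have "(d, -c) = 0" using injD[OF inj] by blast
    then have 1: "d = 0" "c = 0" by (simp_all add: zero_prod_def)
    have "L (b, -a) = (0, -(a*d - b*c))" by (simp add: Lx algebra_simps)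
    also have "\<dots> = L 0" using h L0 by (simp add: zero_prod_def)
    finally have "(b, -a) = 0" using injD[OF inj] by blast
    then have 2: "b = 0" "a = 0" by (simp_all add: zero_prod_def)
    have "L (1,0) = L 0" using 1 2 L0 by (simp add: Lx)
    then have "(1::real,0::real) = 0" using injD[OF inj] by blast
    then show False by (simp add: zero_prod_def)
  qed
  let ?M = "((d * fst w - b * snd w) / (a*d - b*c), (a * snd w - c * fst w) / (a*d - b*c))"
  have e1: "a * ((d * fst w - b * snd w) / (a*d - b*c)) + b * ((a * snd w - c * fst w) / (a*d - b*c)) = fst w"
    using det by (simp add: divide_simps) (simp add: algebra_simps)
  have e2: "c * ((d * fst w - b * snd w) / (a*d - b*c)) + d * ((a * snd w - c * fst w) / (a*d - b*c)) = snd w"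
    using det by (simp add: divide_simps) (simp add: algebra_simps)
  have "L ?M = w" unfolding Lx using e1 e2 by (simp add: prod_eq_iff)
  then show "inv L w = ?M" using inv_f_f[OF inj, of ?M] by simp
qed

lemma Ck_on_subset: "Ck_on k S f \<Longrightarrow> T \<subseteq> S \<Longrightarrow> Ck_on k T f"
proof (induction k arbitrary: f)
  case 0 then show ?case using continuous_on_subset by auto
next
  case (Suc k) then show ?case by auto
qed

lemma smooth_on_subset: "smooth_on S f \<Longrightarrow> T \<subseteq> S \<Longrightarrow> smooth_on T f"
  unfolding smooth_on_def using Ck_on_subset by blast

lemma smooth_inverse_2d:
  fixes f :: "R2 \<Rightarrow> R2"
  assumes U: "open U" "0 \<in> U" and sm: "smooth_on U f" and f0: "f 0 = 0"
    and inj0: "inj (frechet_derivative f (at 0))"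
  shows "diffeo_germ f"
proof -
  have C1: "Ck_on 1 U f" using sm unfolding smooth_on_def by blast
  have dU: "f differentiable (at x)" if "x \<in> U" for x using C1 that by simp
  define F where "F x = Blinfun (frechet_derivative f (at x))" for x
  have bl: "bounded_linear (frechet_derivative f (at x))" if "x \<in> U" for x
    using dU[OF that] frechet_derivative_works has_derivative_bounded_linear by blast
  have Fapp: "blinfun_apply (F x) = frechet_derivative f (at x)" if "x \<in> U" for x
    unfolding F_def using bl[OF that] bounded_linear_Blinfun_apply by blast
  have derf: "(f has_derivative blinfun_apply (F x)) (at x)" if "x \<in> U" for x
    using Fapp[OF that] dU[OF that] frechet_derivative_works by metis
  have contF: "continuous_on U F"
  proof (rule continuous_on_blinfun_componentwise)
    fix i :: R2
    have "Ck_on 0 U (\<lambda>x. frechet_derivative f (at x) i)"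
      using C1 Ck_on.simps(2)[of 0 U f] by (simp only: One_nat_def)
    then have "continuous_on U (\<lambda>x. frechet_derivative f (at x) i)" by simp
    then show "continuous_on U (\<lambda>x. blinfun_apply (F x) i)"
      by (rule continuous_on_cong[THEN iffD1, rotated 2]) (simp_all add: Fapp)
  qed
  have lin0: "linear (frechet_derivative f (at 0))" using bl[OF U(2)] bounded_linear.linear by blast
  obtain M where M: "linear M" "M \<circ> frechet_derivative f (at 0) = id"
    using linear_injective_left_inverse[OF lin0 inj0] by blast
  have blM: "bounded_linear M" using M(1) linear_conv_bounded_linear by blast
  have invf: "Blinfun M o\<^sub>L F 0 = id_blinfun"
  proof (rule blinfun_eqI)
    fix i
    show "blinfun_apply (Blinfun M o\<^sub>L F 0) i = blinfun_apply id_blinfun i"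
      using fun_cong[OF M(2), of i] by (simp add: Fapp[OF U(2)] bounded_linear_Blinfun_apply[OF blM])
  qed
  obtain U' V g g' where UV: "open U'" "U' \<subseteq> U" "0 \<in> U'" "open V" "f 0 \<in> V"
    and hom: "homeomorphism U' V f g"
    and gder: "\<And>y. y \<in> V \<Longrightarrow> (g has_derivative (g' y)) (at y)"
    and g'eq: "\<And>y. y \<in> V \<Longrightarrow> g' y = inv (blinfun_apply (F (g y)))"
    and bij: "\<And>y. y \<in> V \<Longrightarrow> bij (blinfun_apply (F (g y)))"
    using inverse_function_theorem[OF U(1) derf contF U(2) invf] by blast
  have fU': "f ` U' = V" and gV: "g ` V = U'" and gf: "\<And>x. x \<in> U' \<Longrightarrow> g (f x) = x"
    and fg: "\<And>y. y \<in> V \<Longrightarrow> f (g y) = y" and contg: "continuous_on V g"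
    using hom unfolding homeomorphism_def by auto
  have injU': "inj (frechet_derivative f (at x))" if "x \<in> U'" for x
  proof -
    have "f x \<in> V" "g (f x) = x" using that fU' gf by auto
    then show ?thesis using bij[of "f x"] Fapp[of x] that UV(2) bij_is_inj by fastforce
  qed
  define a where "a x = fst (frechet_derivative f (at x) (1,0))" for x
  define c where "c x = snd (frechet_derivative f (at x) (1,0))" for x
  define b where "b x = fst (frechet_derivative f (at x) (0,1))" for x
  define d where "d x = snd (frechet_derivative f (at x) (0,1))" for x
  have det: "a x * d x - b x * c x \<noteq> 0" if "x \<in> U'" for x
    using cramer2(1)[OF bounded_linear.linear[OF bl] injU'[OF that]] that UV(2)
    unfolding a_def b_def c_def d_def by blast
  have Dg: "frechet_derivative g (at y) w =
     ((d (g y) * fst w - b (g y) * snd w) * inverse (a (g y) * d (g y) - b (g y) * c (g y)),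
      (a (g y) * snd w - c (g y) * fst w) * inverse (a (g y) * d (g y) - b (g y) * c (g y)))"
    if "y \<in> V" for y w
  proof -
    have gy: "g y \<in> U'" using gV that by blast
    have gyU: "g y \<in> U" using gy UV(2) by blast
    have "frechet_derivative g (at y) = inv (frechet_derivative f (at (g y)))"
      using frechet_derivative_at[OF gder[OF that]] g'eq[OF that] Fapp[of "g y"] gy UV(2) by auto
    then show ?thesis
      using cramer2(2)[OF bounded_linear.linear[OF bl[OF gyU]] injU'[OF gy], of w]
      unfolding a_def b_def c_def d_def by (simp add: divide_inverse)
  qed
  have abcd: "Ck_on k U' a" "Ck_on k U' b" "Ck_on k U' c" "Ck_on k U' d" for k
  proof -
    have "Ck_on (Suc k) U f" using sm unfolding smooth_on_def by blast
    then have "Ck_on k U (\<lambda>x. frechet_derivative f (at x) v)" for v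
      using Ck_on.simps(2)[of k U f] by blast
    then have "Ck_on k U' (\<lambda>x. frechet_derivative f (at x) v)" for v
      using Ck_on_subset UV(2) by blast
    then show "Ck_on k U' a" "Ck_on k U' b" "Ck_on k U' c" "Ck_on k U' d"
      unfolding a_def b_def c_def d_def using Ck_fst Ck_snd UV(1) by blast+
  qed
  have gsm: "Ck_on k V g" for k
  proof (induction k)
    case 0 then show ?case using contg by simp
  next
    case (Suc k)
    have dif: "\<forall>y\<in>V. g differentiable (at y)" using gder differentiableI by blast
    have "Ck_on k V (\<lambda>y. frechet_derivative g (at y) w)" for w
    proof -
      have idet: "Ck_on k U' (\<lambda>x. inverse (a x * d x - b x * c x))"
        using abcd UV(1) det by (intro Ck_inverse Ck_diff Ck_mult) auto
      have P1: "Ck_on k U' (\<lambda>x. (d x * fst w - b x * snd w) * inverse (a x * d x - b x * c x))"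
        using abcd UV(1) idet by (intro Ck_mult Ck_diff Ck_const) auto
      have P2: "Ck_on k U' (\<lambda>x. (a x * snd w - c x * fst w) * inverse (a x * d x - b x * c x))"
        using abcd UV(1) idet by (intro Ck_mult Ck_diff Ck_const) auto
      have c: "Ck_on k V (\<lambda>y. ((d (g y) * fst w - b (g y) * snd w) * inverse (a (g y) * d (g y) - b (g y) * c (g y)),
      (a (g y) * snd w - c (g y) * fst w) * inverse (a (g y) * d (g y) - b (g y) * c (g y))))"
        by (intro Ck_pair UV(4) Ck_comp[OF UV(4) Suc.IH _ P1] Ck_comp[OF UV(4) Suc.IH _ P2]) (use gV in auto)
      show ?thesis by (rule Ck_on_cong'[OF UV(4) c]) (simp add: Dg)
    qed
    then show ?case using dif by simp
  qed
  show ?thesis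
    unfolding diffeo_germ_def
  proof (intro conjI exI)
    show "f 0 = 0" by (rule f0)
    show "smooth_on U' f" using smooth_on_subset[OF sm UV(2)] .
    show "smooth_on V g" unfolding smooth_on_def using gsm by blast
  qed (use UV fU' gf fg in auto)
qed



lemma smooth_hasd:
  assumes "smooth_on U f" "x \<in> U"
  shows "(f has_derivative frechet_derivative f (at x)) (at x)"
proof -
  have "Ck_on (Suc 0) U f" using assms(1) unfolding smooth_on_def by blast
  then have "f differentiable (at x)" using assms(2) by simp
  then show ?thesis using frechet_derivative_works by blast
qed

lemma LINV:
  assumes "open U" "p \<in> U" "(f has_derivative F) (at p)" "(g has_derivative G) (at (f p))"
    "\<And>x. x \<in> U \<Longrightarrow> g (f x) = x"
  shows "G (F v) = v"
proof -
  have "((\<lambda>x. g (f x)) has_derivative (\<lambda>v. G (F v))) (at p)"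
    by (rule has_derivative_compose[OF assms(3,4)])
  moreover have "((\<lambda>x. g (f x)) has_derivative (\<lambda>v. v)) (at p)"
    by (rule has_derivative_transform_within_open[OF has_derivative_ident assms(1,2)]) (simp add: assms(5))
  ultimately have "(\<lambda>v. G (F v)) = (\<lambda>v. v)" by (rule has_derivative_unique)
  then show ?thesis using fun_cong[of "\<lambda>v. G (F v)" "\<lambda>v. v" v] by simp
qed

lemma fold_x_hasd: "(fold_x has_derivative (\<lambda>u. (fst u, 2 * snd q * snd u))) (at q)"
proof -
  have e: "fold_x = (\<lambda>q. (fst q, (snd q)^2))" by (rule ext) (simp add: fold_x_def)
  show ?thesis unfolding e by (auto intro!: derivative_eq_intros)
qed

lemma fold_y_eq: "fold_y p = (fst p ^ 2, snd p)" by (simp add: fold_y_def)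

lemma fold_data:
  fixes \<gamma> :: "R2 \<Rightarrow> R2"
  assumes fg: "fold_germ \<gamma>" and U0: "open U0" "0 \<in> U0" "smooth_on U0 \<gamma>"
  obtains U\<psi> \<psi>' W \<phi>' w z where
   "open U\<psi>" "0 \<in> U\<psi>" "smooth_on U\<psi> \<psi>'" "\<psi>' 0 = 0"
   "open W" "0 \<in> W" "W \<subseteq> U0" "smooth_on W \<phi>'" "\<phi>' 0 = 0"
   "\<And>p. p \<in> W \<Longrightarrow> \<gamma> p \<in> U\<psi> \<and> \<psi>' (\<gamma> p) = fold_x (\<phi>' p)"
   "\<And>U1 q. U1 \<subseteq> W \<Longrightarrow> open U1 \<Longrightarrow> q \<in> \<gamma> ` singular_set \<gamma> U1 \<Longrightarrow> snd (\<psi>' q) = 0"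
   "inj (frechet_derivative \<phi>' (at 0))"
   "frechet_derivative (\<lambda>q. snd (\<psi>' q)) (at 0) w = 0"
   "frechet_derivative (\<lambda>q. snd (\<psi>' q)) (at 0) z = 1" "w \<noteq> 0"
   "\<And>v. frechet_derivative \<gamma> (at 0) v = fst (frechet_derivative \<phi>' (at 0) v) *\<^sub>R w"
proof -
  have g0: "\<gamma> 0 = 0" using fg unfolding fold_germ_def map_germ_def by blast
  obtain \<phi>' \<psi>' where d\<phi>: "diffeo_germ \<phi>'" and d\<psi>: "diffeo_germ \<psi>'"
    and ev: "\<forall>\<^sub>F p in nhds 0. \<psi>' (\<gamma> p) = fold_x (\<phi>' p)"
    using fg unfolding fold_germ_def A_equivalent_def by blast
  obtain U\<phi> V\<phi> \<theta>\<phi> where \<phi>0: "\<phi>' 0 = 0" and U\<phi>: "open U\<phi>" "open V\<phi>" "0 \<in> U\<phi>" "\<phi>' ` U\<phi> = V\<phi>"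
    "smooth_on U\<phi> \<phi>'" "smooth_on V\<phi> \<theta>\<phi>" "\<And>x. x \<in> U\<phi> \<Longrightarrow> \<theta>\<phi> (\<phi>' x) = x"
    "\<And>y. y \<in> V\<phi> \<Longrightarrow> \<phi>' (\<theta>\<phi> y) = y"
    using d\<phi> unfolding diffeo_germ_def by metis
  obtain U\<psi> V\<psi> \<theta> where \<psi>0: "\<psi>' 0 = 0" and U\<psi>: "open U\<psi>" "open V\<psi>" "0 \<in> U\<psi>" "\<psi>' ` U\<psi> = V\<psi>"
    "smooth_on U\<psi> \<psi>'" "smooth_on V\<psi> \<theta>" "\<And>x. x \<in> U\<psi> \<Longrightarrow> \<theta> (\<psi>' x) = x"
    "\<And>y. y \<in> V\<psi> \<Longrightarrow> \<psi>' (\<theta> y) = y"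
    using d\<psi> unfolding diffeo_germ_def by metis
  obtain E where E: "open E" "0 \<in> E" "\<And>p. p \<in> E \<Longrightarrow> \<psi>' (\<gamma> p) = fold_x (\<phi>' p)"
    using ev unfolding eventually_nhds by blast
  have cont: "continuous_on U0 \<gamma>"
    using U0(3) unfolding smooth_on_def by (metis Ck_on.simps(1))
  have op: "open (\<gamma> -` U\<psi> \<inter> U0)" using cont U0(1) U\<psi>(1) continuous_on_open_vimage by blast
  define W where "W = (\<gamma> -` U\<psi> \<inter> U0) \<inter> E \<inter> U\<phi>"
  have W: "open W" "0 \<in> W" "W \<subseteq> U0" "W \<subseteq> U\<phi>" "W \<subseteq> E"
    unfolding W_def using op E U\<phi> U0 U\<psi> g0 by auto
  have Wp: "\<gamma> p \<in> U\<psi> \<and> \<psi>' (\<gamma> p) = fold_x (\<phi>' p)" if "p \<in> W" for p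
    using that E(3) unfolding W_def by auto
  have d\<gamma>: "(\<gamma> has_derivative frechet_derivative \<gamma> (at p)) (at p)" if "p \<in> W" for p
    using smooth_hasd[OF U0(3)] W(3) that by blast
  have d\<phi>': "(\<phi>' has_derivative frechet_derivative \<phi>' (at p)) (at p)" if "p \<in> U\<phi>" for p
    using smooth_hasd[OF U\<phi>(5) that] .
  have d\<theta>\<phi>: "(\<theta>\<phi> has_derivative frechet_derivative \<theta>\<phi> (at y)) (at y)" if "y \<in> V\<phi>" for y
    using smooth_hasd[OF U\<phi>(6) that] .
  have d\<psi>': "(\<psi>' has_derivative frechet_derivative \<psi>' (at q)) (at q)" if "q \<in> U\<psi>" for q
    using smooth_hasd[OF U\<psi>(5) that] .
  have d\<theta>: "(\<theta> has_derivative frechet_derivative \<theta> (at y)) (at y)" if "y \<in> V\<psi>" for y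
    using smooth_hasd[OF U\<psi>(6) that] .
  have CH: "frechet_derivative \<psi>' (at (\<gamma> p)) (frechet_derivative \<gamma> (at p) v) =
      (fst (frechet_derivative \<phi>' (at p) v), 2 * snd (\<phi>' p) * snd (frechet_derivative \<phi>' (at p) v))"
    if "p \<in> W" for p v
  proof -
    have h1: "((\<lambda>p. \<psi>' (\<gamma> p)) has_derivative (\<lambda>v. frechet_derivative \<psi>' (at (\<gamma> p)) (frechet_derivative \<gamma> (at p) v))) (at p)"
      by (rule has_derivative_compose[OF d\<gamma>[OF that] d\<psi>']) (use Wp[OF that] in blast)
    have h2: "((\<lambda>p. fold_x (\<phi>' p)) has_derivative (\<lambda>v. (fst (frechet_derivative \<phi>' (at p) v), 2 * snd (\<phi>' p) * snd (frechet_derivative \<phi>' (at p) v)))) (at p)"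
      by (rule has_derivative_compose[OF d\<phi>' fold_x_hasd]) (use W(4) that in blast)
    have h2': "((\<lambda>p. \<psi>' (\<gamma> p)) has_derivative (\<lambda>v. (fst (frechet_derivative \<phi>' (at p) v), 2 * snd (\<phi>' p) * snd (frechet_derivative \<phi>' (at p) v)))) (at p)"
      by (rule has_derivative_transform_within_open[OF h2 W(1) that]) (simp add: Wp)
    have "(\<lambda>v. frechet_derivative \<psi>' (at (\<gamma> p)) (frechet_derivative \<gamma> (at p) v)) =
      (\<lambda>v. (fst (frechet_derivative \<phi>' (at p) v), 2 * snd (\<phi>' p) * snd (frechet_derivative \<phi>' (at p) v)))"
      by (rule has_derivative_unique[OF h1 h2'])
    then show ?thesis by (rule fun_cong)
  qed
  have inj\<phi>: "inj (frechet_derivative \<phi>' (at p))" if "p \<in> U\<phi>" for p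
  proof (rule inj_on_inverseI)
    fix v
    show "frechet_derivative \<theta>\<phi> (at (\<phi>' p)) (frechet_derivative \<phi>' (at p) v) = v"
      by (rule LINV[OF U\<phi>(1) that d\<phi>'[OF that] d\<theta>\<phi>]) (use U\<phi>(4,7) that in auto)
  qed
  have lin\<gamma>: "linear (frechet_derivative \<gamma> (at p))" if "p \<in> W" for p
    using d\<gamma>[OF that] has_derivative_linear by blast
  have lin\<phi>: "linear (frechet_derivative \<phi>' (at p))" if "p \<in> U\<phi>" for p
    using d\<phi>'[OF that] has_derivative_linear by blast
  have lin\<psi>: "linear (frechet_derivative \<psi>' (at q))" if "q \<in> U\<psi>" for q
    using d\<psi>'[OF that] has_derivative_linear by blast
  have sing: "snd (\<psi>' q) = 0" if H: "U1 \<subseteq> W" "open U1" "q \<in> \<gamma> ` singular_set \<gamma> U1" for U1 q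
  proof -
    obtain p where p: "p \<in> U1" "dim (range (frechet_derivative \<gamma> (at p))) < DIM(R2)" "q = \<gamma> p"
      using H(3) unfolding singular_set_def by blast
    have pW: "p \<in> W" using p(1) H(1) by blast
    have "snd (\<phi>' p) = 0"
    proof (rule ccontr)
      assume s: "snd (\<phi>' p) \<noteq> 0"
      have "inj (frechet_derivative \<gamma> (at p))"
        unfolding linear_injective_0[OF lin\<gamma>[OF pW]]
      proof (intro allI impI)
        fix v assume v: "frechet_derivative \<gamma> (at p) v = 0"
        have "frechet_derivative \<psi>' (at (\<gamma> p)) (frechet_derivative \<gamma> (at p) v) = 0"
          using v linear_0[OF lin\<psi>] Wp[OF pW] by auto
        then have "fst (frechet_derivative \<phi>' (at p) v) = 0" "snd (frechet_derivative \<phi>' (at p) v) = 0"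
          using CH[OF pW, of v] s by (auto simp: zero_prod_def)
        then have "frechet_derivative \<phi>' (at p) v = 0" by (simp add: prod_eq_iff)
        then show "v = 0" using inj\<phi>[of p] pW W(4) linear_injective_0[OF lin\<phi>[of p]] by blast
      qed
      then have "dim (range (frechet_derivative \<gamma> (at p))) = dim (UNIV :: R2 set)"
        using dim_image_eq[OF lin\<gamma>[OF pW], of UNIV] by (simp add: inj_on_subset)
      then show False using p(2) by simp
    qed
    then show ?thesis using Wp[OF pW] p(3) by (simp add: fold_x_def)
  qed
  have 0: "0 \<in> V\<psi>" using U\<psi>(3,4) \<psi>0 by force
  have \<theta>0: "\<theta> 0 = 0" using U\<psi>(7)[OF U\<psi>(3)] \<psi>0 by simp
  have L1: "frechet_derivative \<psi>' (at 0) (frechet_derivative \<theta> (at 0) u) = u" for u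
    using LINV[OF U\<psi>(2) 0 d\<theta>[OF 0], of \<psi>' "frechet_derivative \<psi>' (at 0)" u] d\<psi>'[OF U\<psi>(3)] U\<psi>(8) \<theta>0 by simp
  have L2: "frechet_derivative \<theta> (at 0) (frechet_derivative \<psi>' (at 0) y) = y" for y
    using LINV[OF U\<psi>(1,3) d\<psi>'[OF U\<psi>(3)], of \<theta> "frechet_derivative \<theta> (at 0)" y] d\<theta>[OF 0] U\<psi>(7) \<psi>0 by simp
  define w where "w = frechet_derivative \<theta> (at 0) (1,0)"
  define z where "z = frechet_derivative \<theta> (at 0) (0,1)"
  have ell: "frechet_derivative (\<lambda>q. snd (\<psi>' q)) (at 0) = (\<lambda>v. snd (frechet_derivative \<psi>' (at 0) v))"
    by (rule frechet_derivative_at[symmetric], rule has_derivative_snd[OF d\<psi>'[OF U\<psi>(3)]])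
  have lin\<theta>: "linear (frechet_derivative \<theta> (at 0))" using d\<theta>[OF 0] has_derivative_linear by blast
  show ?thesis
  proof (rule that[of U\<psi> \<psi>' W \<phi>' w z])
    show "smooth_on W \<phi>'" using smooth_on_subset[OF U\<phi>(5) W(4)] .
    show "inj (frechet_derivative \<phi>' (at 0))" using inj\<phi> U\<phi>(3) by blast
    show "frechet_derivative (\<lambda>q. snd (\<psi>' q)) (at 0) w = 0" unfolding ell w_def L1 by simp
    show "frechet_derivative (\<lambda>q. snd (\<psi>' q)) (at 0) z = 1" unfolding ell z_def L1 by simp
    show "w \<noteq> 0"
    proof
      assume "w = 0"
      then have "frechet_derivative \<psi>' (at 0) w = 0" using linear_0[OF lin\<psi>[OF U\<psi>(3)]] by simp
      then show False unfolding w_def L1 by (simp add: zero_prod_def)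
    qed
    fix v
    have "frechet_derivative \<psi>' (at 0) (frechet_derivative \<gamma> (at 0) v) = (fst (frechet_derivative \<phi>' (at 0) v), 0)"
      using CH[OF W(2), of v] g0 \<phi>0 by simp
    then have "frechet_derivative \<gamma> (at 0) v = frechet_derivative \<theta> (at 0) (fst (frechet_derivative \<phi>' (at 0) v), 0)"
      using L2[of "frechet_derivative \<gamma> (at 0) v"] by simp
    also have "\<dots> = frechet_derivative \<theta> (at 0) (fst (frechet_derivative \<phi>' (at 0) v) *\<^sub>R (1,0))" by simp
    also have "\<dots> = fst (frechet_derivative \<phi>' (at 0) v) *\<^sub>R w"
      unfolding w_def by (rule linear_cmul[OF lin\<theta>])
    finally show "frechet_derivative \<gamma> (at 0) v = fst (frechet_derivative \<phi>' (at 0) v) *\<^sub>R w" .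
  qed (use U\<psi> \<psi>0 W \<phi>0 Wp sing in auto)
qed



lemma tangent_cone_ker:
  fixes f :: "R2 \<Rightarrow> real"
  assumes fd: "(f has_derivative L) (at 0)" and f0: "f 0 = 0" and fD: "\<And>q. q \<in> D \<Longrightarrow> f q = 0"
  shows "tangent_cone0 D \<subseteq> {v. L v = 0}"
proof
  fix v assume "v \<in> tangent_cone0 D"
  then obtain x t where xt: "\<And>n. x n \<in> D" "\<And>n. t n > 0" and t0: "t \<longlonglongrightarrow> 0"
    and y: "(\<lambda>n. (1 / t n) *\<^sub>R x n) \<longlonglongrightarrow> v"
    unfolding tangent_cone0_def by blast
  define y where "y n = (1 / t n) *\<^sub>R x n" for n
  have bl: "bounded_linear L" and G: "(\<lambda>h. norm (f (0 + h) - f 0 - L h) / norm h) \<midarrow>0\<rightarrow> 0"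
    using fd unfolding has_derivative_at by auto
  define G where "G h = norm (f h - L h) / norm h" for h
  have "G \<midarrow>0\<rightarrow> 0" using G unfolding G_def by (simp add: f0)
  then have cG: "isCont G 0" unfolding continuous_at G_def by simp
  have xeq: "x n = t n *\<^sub>R y n" for n using xt(2)[of n] unfolding y_def by simp
  have "x \<longlonglongrightarrow> 0 *\<^sub>R v" unfolding xeq[abs_def] using t0 y[folded y_def] by (rule tendsto_scaleR)
  then have x0: "x \<longlonglongrightarrow> 0" by simp
  have Gx: "(\<lambda>n. G (x n)) \<longlonglongrightarrow> G 0" by (rule isCont_tendsto_compose[OF cG x0])
  have eqn: "norm (L (y n)) = G (x n) * norm (y n)" for n
  proof (cases "x n = 0")
    case True
    then show ?thesis unfolding y_def using linear_0[OF bounded_linear.linear[OF bl]] by simp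
  next
    case False
    have "norm (L (y n)) = norm (L (x n)) / t n"
      unfolding y_def using xt(2)[of n] linear_cmul[OF bounded_linear.linear[OF bl]] by (simp add: abs_mult)
    also have "norm (L (x n)) = G (x n) * norm (x n)"
      unfolding G_def using False fD[OF xt(1)] by simp
    also have "norm (y n) = norm (x n) / t n" unfolding y_def using xt(2)[of n] by simp
    ultimately show ?thesis by simp
  qed
  have "(\<lambda>n. G (x n) * norm (y n)) \<longlonglongrightarrow> G 0 * norm v"
    by (intro tendsto_mult Gx tendsto_norm) (use y y_def in simp)
  then have "(\<lambda>n. norm (L (y n))) \<longlonglongrightarrow> 0" unfolding eqn G_def by simp
  then have "(\<lambda>n. L (y n)) \<longlonglongrightarrow> 0" by (rule tendsto_norm_zero_cancel)
  moreover have "(\<lambda>n. L (y n)) \<longlonglongrightarrow> L v"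
    using bounded_linear.tendsto[OF bl] y unfolding y_def by blast
  ultimately have "L v = 0" using LIMSEQ_unique by blast
  then show "v \<in> {v. L v = 0}" by simp
qed

lemma key_algebra:
  fixes l1 l2 :: "R2 \<Rightarrow> real"
  assumes lin1: "linear l1" and lin2: "linear l2" and z1: "l1 z1 = 1" and z2: "l2 z2 = 1"
    and sum: "\<And>x. \<exists>u v. x = u + v \<and> l1 u = 0 \<and> l2 v = 0"
  shows "l1 v = 0 \<Longrightarrow> l2 v = 0 \<Longrightarrow> v = 0"
proof -
  have ex1: "l1 u = l1 (1,0) * fst u + l1 (0,1) * snd u" for u
  proof -
    have "u = fst u *\<^sub>R (1,0) + snd u *\<^sub>R (0,1)" by (cases u) simp
    then have "l1 u = l1 (fst u *\<^sub>R (1,0)) + l1 (snd u *\<^sub>R (0,1))"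
      using linear_add[OF lin1] by metis
    then show ?thesis by (simp only: linear_cmul[OF lin1]) (simp add: mult.commute)
  qed
  have ex2: "l2 u = l2 (1,0) * fst u + l2 (0,1) * snd u" for u
  proof -
    have "u = fst u *\<^sub>R (1,0) + snd u *\<^sub>R (0,1)" by (cases u) simp
    then have "l2 u = l2 (fst u *\<^sub>R (1,0)) + l2 (snd u *\<^sub>R (0,1))"
      using linear_add[OF lin2] by metis
    then show ?thesis by (simp only: linear_cmul[OF lin2]) (simp add: mult.commute)
  qed
  define a where "a = l1 (1,0)"
  define b where "b = l1 (0,1)"
  define c where "c = l2 (1,0)"
  define d where "d = l2 (0,1)"
  have ab: "a \<noteq> 0 \<or> b \<noteq> 0" using z1 ex1[of z1] unfolding a_def b_def by auto
  have det: "a * d - b * c \<noteq> 0"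
  proof
    assume h: "a * d - b * c = 0"
    define s where "s = (c * a + d * b) / (a*a + b*b)"
    have pos: "a*a + b*b \<noteq> 0" using ab by (metis add_nonneg_eq_0_iff mult_eq_0_iff zero_le_square)
    have cs: "c = s * a"
    proof -
      have "c * (a*a + b*b) = (c * a + d * b) * a" using h by algebra
      then show ?thesis unfolding s_def using pos by (simp add: field_simps)
    qed
    have ds: "d = s * b"
    proof -
      have "d * (a*a + b*b) = (c * a + d * b) * b" using h by algebra
      then show ?thesis unfolding s_def using pos by (simp add: field_simps)
    qed
    have l21: "l2 u = s * l1 u" for u
      using ex1[of u] ex2[of u] cs ds unfolding a_def b_def c_def d_def by (simp add: algebra_simps)
    obtain u v where uv: "z2 = u + v" "l1 u = 0" "l2 v = 0" using sum by blast
    have "l2 z2 = l2 u + l2 v" using uv(1) linear_add[OF lin2] by simp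
    also have "\<dots> = 0" using l21[of u] uv by simp
    finally show False using z2 by simp
  qed
  assume v1: "l1 v = 0" and v2: "l2 v = 0"
  have e1: "a * fst v + b * snd v = 0" and e2: "c * fst v + d * snd v = 0"
    using v1 v2 ex1[of v] ex2[of v] unfolding a_def b_def c_def d_def by auto
  have "(a * d - b * c) * fst v = d * (a * fst v + b * snd v) - b * (c * fst v + d * snd v)" by algebra
  then have f: "fst v = 0" using e1 e2 det by simp
  have "(a * d - b * c) * snd v = a * (c * fst v + d * snd v) - c * (a * fst v + b * snd v)" by algebra
  then have s: "snd v = 0" using e1 e2 det by simp
  show "v = 0" using f s by (simp add: prod_eq_iff)
qed



theorem lemma3p1:
  fixes \<gamma>1 \<gamma>2 :: "R2 \<Rightarrow> R2"
  assumes "fold_germ \<gamma>1" and "fold_germ \<gamma>2"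
    and "discriminants_transversal \<gamma>1 \<gamma>2"
  shows "\<exists>\<phi>1 \<phi>2 \<psi>. diffeo_germ \<phi>1 \<and> diffeo_germ \<phi>2 \<and> diffeo_germ \<psi> \<and>
           (\<forall>\<^sub>F p in nhds 0. \<psi> (\<gamma>1 p) = fold_x (\<phi>1 p)) \<and>
           (\<forall>\<^sub>F p in nhds 0. \<psi> (\<gamma>2 p) = fold_y (\<phi>2 p))"
proof -
  have "\<exists>U0. open U0 \<and> 0 \<in> U0 \<and> smooth_on U0 \<gamma>1 \<and> smooth_on U0 \<gamma>2 \<and>
       (\<forall>U1 U2. open U1 \<and> open U2 \<and> 0 \<in> U1 \<and> 0 \<in> U2 \<and> U1 \<subseteq> U0 \<and> U2 \<subseteq> U0 \<longrightarrow>
          {u + v | u v. u \<in> tangent_cone0 (\<gamma>1 ` singular_set \<gamma>1 U1) \<and>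
                        v \<in> tangent_cone0 (\<gamma>2 ` singular_set \<gamma>2 U2)} = UNIV)"
    using assms(3) unfolding discriminants_transversal_def .
  then obtain U0 where H: "open U0 \<and> 0 \<in> U0 \<and> smooth_on U0 \<gamma>1 \<and> smooth_on U0 \<gamma>2 \<and>
       (\<forall>U1 U2. open U1 \<and> open U2 \<and> 0 \<in> U1 \<and> 0 \<in> U2 \<and> U1 \<subseteq> U0 \<and> U2 \<subseteq> U0 \<longrightarrow>
          {u + v | u v. u \<in> tangent_cone0 (\<gamma>1 ` singular_set \<gamma>1 U1) \<and>
                        v \<in> tangent_cone0 (\<gamma>2 ` singular_set \<gamma>2 U2)} = UNIV)" ..
  have U0: "open U0" "0 \<in> U0" "smooth_on U0 \<gamma>1" "smooth_on U0 \<gamma>2"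
    using conjunct1[OF H] conjunct1[OF conjunct2[OF H]] conjunct1[OF conjunct2[OF conjunct2[OF H]]]
      conjunct1[OF conjunct2[OF conjunct2[OF conjunct2[OF H]]]] by - assumption+
  have TR: "\<forall>U1 U2. open U1 \<and> open U2 \<and> 0 \<in> U1 \<and> 0 \<in> U2 \<and> U1 \<subseteq> U0 \<and> U2 \<subseteq> U0 \<longrightarrow>
          {u + v | u v. u \<in> tangent_cone0 (\<gamma>1 ` singular_set \<gamma>1 U1) \<and>
                        v \<in> tangent_cone0 (\<gamma>2 ` singular_set \<gamma>2 U2)} = UNIV"
    by (rule conjunct2[OF conjunct2[OF conjunct2[OF conjunct2[OF H]]]])
  have g10: "\<gamma>1 0 = 0" using assms(1) unfolding fold_germ_def map_germ_def by blast
  have g20: "\<gamma>2 0 = 0" using assms(2) unfolding fold_germ_def map_germ_def by blast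
  obtain U\<psi>1 \<psi>1 W1 \<phi>1 w1 z1 where
    A1: "open U\<psi>1" "0 \<in> U\<psi>1" "smooth_on U\<psi>1 \<psi>1" "\<psi>1 0 = 0"
    "open W1" "0 \<in> W1" "W1 \<subseteq> U0" "smooth_on W1 \<phi>1" "\<phi>1 0 = 0"
    and A1eq: "\<And>p. p \<in> W1 \<Longrightarrow> \<gamma>1 p \<in> U\<psi>1 \<and> \<psi>1 (\<gamma>1 p) = fold_x (\<phi>1 p)"
    and A1sing: "\<And>U1 q. U1 \<subseteq> W1 \<Longrightarrow> open U1 \<Longrightarrow> q \<in> \<gamma>1 ` singular_set \<gamma>1 U1 \<Longrightarrow> snd (\<psi>1 q) = 0"
    and A1inj: "inj (frechet_derivative \<phi>1 (at 0))"
    and A1w: "frechet_derivative (\<lambda>q. snd (\<psi>1 q)) (at 0) w1 = 0"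
    and A1z: "frechet_derivative (\<lambda>q. snd (\<psi>1 q)) (at 0) z1 = 1" and A1w0: "w1 \<noteq> 0"
    and A1D: "\<And>v. frechet_derivative \<gamma>1 (at 0) v = fst (frechet_derivative \<phi>1 (at 0) v) *\<^sub>R w1"
    by (rule fold_data[OF assms(1) U0(1,2,3)]) blast
  obtain U\<psi>2 \<psi>2 W2 \<phi>2 w2 z2 where
    A2: "open U\<psi>2" "0 \<in> U\<psi>2" "smooth_on U\<psi>2 \<psi>2" "\<psi>2 0 = 0"
    "open W2" "0 \<in> W2" "W2 \<subseteq> U0" "smooth_on W2 \<phi>2" "\<phi>2 0 = 0"
    and A2eq: "\<And>p. p \<in> W2 \<Longrightarrow> \<gamma>2 p \<in> U\<psi>2 \<and> \<psi>2 (\<gamma>2 p) = fold_x (\<phi>2 p)"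
    and A2sing: "\<And>U1 q. U1 \<subseteq> W2 \<Longrightarrow> open U1 \<Longrightarrow> q \<in> \<gamma>2 ` singular_set \<gamma>2 U1 \<Longrightarrow> snd (\<psi>2 q) = 0"
    and A2inj: "inj (frechet_derivative \<phi>2 (at 0))"
    and A2w: "frechet_derivative (\<lambda>q. snd (\<psi>2 q)) (at 0) w2 = 0"
    and A2z: "frechet_derivative (\<lambda>q. snd (\<psi>2 q)) (at 0) z2 = 1" and A2w0: "w2 \<noteq> 0"
    and A2D: "\<And>v. frechet_derivative \<gamma>2 (at 0) v = fst (frechet_derivative \<phi>2 (at 0) v) *\<^sub>R w2"
    by (rule fold_data[OF assms(2) U0(1,2,4)]) blast
  define f1 where "f1 q = snd (\<psi>1 q)" for q
  define f2 where "f2 q = snd (\<psi>2 q)" for q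
  have f1e: "f1 = (\<lambda>q. snd (\<psi>1 q))" by (rule ext) (simp add: f1_def)
  have f2e: "f2 = (\<lambda>q. snd (\<psi>2 q))" by (rule ext) (simp add: f2_def)
  define l1 where "l1 = frechet_derivative f1 (at 0)"
  define l2 where "l2 = frechet_derivative f2 (at 0)"
  have hd1: "(f1 has_derivative l1) (at 0)"
  proof -
    have h: "((\<lambda>q. snd (\<psi>1 q)) has_derivative (\<lambda>v. snd (frechet_derivative \<psi>1 (at 0) v))) (at 0)"
      by (rule has_derivative_snd[OF smooth_hasd[OF A1(3,2)]])
    show ?thesis unfolding l1_def f1_def frechet_derivative_at[OF h, symmetric] by (rule h)
  qed
  have hd2: "(f2 has_derivative l2) (at 0)"
  proof -
    have h: "((\<lambda>q. snd (\<psi>2 q)) has_derivative (\<lambda>v. snd (frechet_derivative \<psi>2 (at 0) v))) (at 0)"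
      by (rule has_derivative_snd[OF smooth_hasd[OF A2(3,2)]])
    show ?thesis unfolding l2_def f2_def frechet_derivative_at[OF h, symmetric] by (rule h)
  qed
  have lin1: "linear l1" using hd1 has_derivative_linear by blast
  have lin2: "linear l2" using hd2 has_derivative_linear by blast
  have T1: "tangent_cone0 (\<gamma>1 ` singular_set \<gamma>1 W1) \<subseteq> {v. l1 v = 0}"
  proof (rule tangent_cone_ker[OF hd1])
    show "f1 0 = 0" using A1(4) by (simp add: f1_def)
  next
    fix q assume "q \<in> \<gamma>1 ` singular_set \<gamma>1 W1"
    then show "f1 q = 0" unfolding f1_def using A1sing[of W1 q] A1(5) by blast
  qed
  have T2: "tangent_cone0 (\<gamma>2 ` singular_set \<gamma>2 W2) \<subseteq> {v. l2 v = 0}"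
  proof (rule tangent_cone_ker[OF hd2])
    show "f2 0 = 0" using A2(4) by (simp add: f2_def)
  next
    fix q assume "q \<in> \<gamma>2 ` singular_set \<gamma>2 W2"
    then show "f2 q = 0" unfolding f2_def using A2sing[of W2 q] A2(5) by blast
  qed
  have sum: "\<exists>u v. x = u + v \<and> l1 u = 0 \<and> l2 v = 0" for x
  proof -
    have "x \<in> {u + v | u v. u \<in> tangent_cone0 (\<gamma>1 ` singular_set \<gamma>1 W1) \<and>
                        v \<in> tangent_cone0 (\<gamma>2 ` singular_set \<gamma>2 W2)}"
    proof -
      have "open W1 \<and> open W2 \<and> 0 \<in> W1 \<and> 0 \<in> W2 \<and> W1 \<subseteq> U0 \<and> W2 \<subseteq> U0"
        using A1 A2 by simp
      then have "{u + v | u v. u \<in> tangent_cone0 (\<gamma>1 ` singular_set \<gamma>1 W1) \<and>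
                        v \<in> tangent_cone0 (\<gamma>2 ` singular_set \<gamma>2 W2)} = UNIV"
        using TR by blast
      then show ?thesis by (simp only: UNIV_I)
    qed
    then show ?thesis using T1 T2 by blast
  qed
  have KEY: "v = 0" if "l1 v = 0" "l2 v = 0" for v
    by (rule key_algebra[OF lin1 lin2 _ _ sum, of z1 z2 v])
       (use A1z A2z that in \<open>simp_all add: l1_def l2_def f1e f2e\<close>)
  have l1w1: "l1 w1 = 0" and l2w2: "l2 w2 = 0"
    using A1w A2w by (simp_all add: l1_def l2_def f1e f2e)
  have l2w1: "l2 w1 \<noteq> 0" using KEY[OF l1w1] A1w0 by blast
  have l1w2: "l1 w2 \<noteq> 0" using KEY[OF _ l2w2] A2w0 by blast
  define \<Psi> where "\<Psi> q = (f2 q, f1 q)" for q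
  have d\<Psi>: "diffeo_germ \<Psi>"
  proof (rule smooth_inverse_2d[of "U\<psi>1 \<inter> U\<psi>2"])
    show "open (U\<psi>1 \<inter> U\<psi>2)" "0 \<in> U\<psi>1 \<inter> U\<psi>2" using A1 A2 by auto
    show "\<Psi> 0 = 0" unfolding \<Psi>_def f1_def f2_def using A1(4) A2(4) by (simp add: zero_prod_def)
    show "smooth_on (U\<psi>1 \<inter> U\<psi>2) \<Psi>"
      unfolding smooth_on_def \<Psi>_def f1_def f2_def
    proof
      fix k
      have o: "open (U\<psi>1 \<inter> U\<psi>2)" using A1 A2 by auto
      have "Ck_on k (U\<psi>1 \<inter> U\<psi>2) \<psi>1" "Ck_on k (U\<psi>1 \<inter> U\<psi>2) \<psi>2"
        using A1(3) A2(3) Ck_on_subset unfolding smooth_on_def by blast+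
      then show "Ck_on k (U\<psi>1 \<inter> U\<psi>2) (\<lambda>x. (snd (\<psi>2 x), snd (\<psi>1 x)))"
        by (intro Ck_pair Ck_snd o)
    qed
    have hd: "(\<Psi> has_derivative (\<lambda>v. (l2 v, l1 v))) (at 0)"
      unfolding \<Psi>_def by (rule has_derivative_Pair[OF hd2 hd1])
    have eq: "frechet_derivative \<Psi> (at 0) = (\<lambda>v. (l2 v, l1 v))"
      using frechet_derivative_at[OF hd] by simp
    show "inj (frechet_derivative \<Psi> (at 0))"
      unfolding eq linear_injective_0[OF has_derivative_linear[OF hd]]
      using KEY by (simp add: zero_prod_def)
  qed
  have c1: "continuous_on U0 \<gamma>1" using U0(3) unfolding smooth_on_def by (metis Ck_on.simps(1))
  have c2: "continuous_on U0 \<gamma>2" using U0(4) unfolding smooth_on_def by (metis Ck_on.simps(1))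
  have o1: "open (\<gamma>1 -` U\<psi>2 \<inter> U0)" using continuous_on_open_vimage[OF U0(1)] c1 A2(1) by blast
  have o2: "open (\<gamma>2 -` U\<psi>1 \<inter> U0)" using continuous_on_open_vimage[OF U0(1)] c2 A1(1) by blast
  define X1 where "X1 = W1 \<inter> (\<gamma>1 -` U\<psi>2 \<inter> U0)"
  have X1: "open X1" "0 \<in> X1" "X1 \<subseteq> W1" "X1 \<subseteq> U0" "\<gamma>1 ` X1 \<subseteq> U\<psi>2"
    unfolding X1_def using A1 A2 g10 U0 o1 by auto
  define X2 where "X2 = W2 \<inter> (\<gamma>2 -` U\<psi>1 \<inter> U0)"
  have X2: "open X2" "0 \<in> X2" "X2 \<subseteq> W2" "X2 \<subseteq> U0" "\<gamma>2 ` X2 \<subseteq> U\<psi>1"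
    unfolding X2_def using A1 A2 g20 U0 o2 by auto
  define \<Phi>1 where "\<Phi>1 p = (f2 (\<gamma>1 p), snd (\<phi>1 p))" for p
  define \<Phi>2 where "\<Phi>2 p = (snd (\<phi>2 p), f1 (\<gamma>2 p))" for p
  have d\<Phi>1: "diffeo_germ \<Phi>1"
  proof (rule smooth_inverse_2d[OF X1(1,2)])
    show "\<Phi>1 0 = 0" unfolding \<Phi>1_def f2_def using A1(9) A2(4) g10 by (simp add: zero_prod_def)
    show "smooth_on X1 \<Phi>1"
      unfolding smooth_on_def \<Phi>1_def f2_def
    proof
      fix k
      have a: "Ck_on k X1 \<gamma>1" "Ck_on k X1 \<phi>1" "Ck_on k U\<psi>2 \<psi>2"
        using U0(3) A1(8) A2(3) X1 Ck_on_subset unfolding smooth_on_def by blast+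
      have b: "Ck_on k U\<psi>2 (\<lambda>q. snd (\<psi>2 q))" by (rule Ck_snd[OF A2(1) a(3)])
      show "Ck_on k X1 (\<lambda>p. (snd (\<psi>2 (\<gamma>1 p)), snd (\<phi>1 p)))"
        by (intro Ck_pair Ck_snd X1(1) a(2) Ck_comp[OF X1(1) a(1) X1(5) b])
    qed
    have hg: "(\<gamma>1 has_derivative frechet_derivative \<gamma>1 (at 0)) (at 0)" by (rule smooth_hasd[OF U0(3,2)])
    have hp: "(\<phi>1 has_derivative frechet_derivative \<phi>1 (at 0)) (at 0)" by (rule smooth_hasd[OF A1(8,6)])
    have hd2': "(f2 has_derivative l2) (at (\<gamma>1 0))" using hd2 g10 by simp
    have hd: "(\<Phi>1 has_derivative (\<lambda>v. (l2 (frechet_derivative \<gamma>1 (at 0) v), snd (frechet_derivative \<phi>1 (at 0) v)))) (at 0)"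
      unfolding \<Phi>1_def by (intro has_derivative_Pair has_derivative_compose[OF hg hd2'] has_derivative_snd hp)
    have eq: "frechet_derivative \<Phi>1 (at 0) = (\<lambda>v. (l2 (frechet_derivative \<gamma>1 (at 0) v), snd (frechet_derivative \<phi>1 (at 0) v)))"
      using frechet_derivative_at[OF hd] by simp
    have linp: "linear (frechet_derivative \<phi>1 (at 0))" using hp has_derivative_linear by blast
    show "inj (frechet_derivative \<Phi>1 (at 0))"
      unfolding linear_injective_0[OF has_derivative_linear[OF hd]] eq
    proof (intro allI impI)
      fix v assume h: "(l2 (frechet_derivative \<gamma>1 (at 0) v), snd (frechet_derivative \<phi>1 (at 0) v)) = 0"
      have "l2 (frechet_derivative \<gamma>1 (at 0) v) = fst (frechet_derivative \<phi>1 (at 0) v) * l2 w1"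
        unfolding A1D using linear_cmul[OF lin2] by simp
      then have "fst (frechet_derivative \<phi>1 (at 0) v) = 0" "snd (frechet_derivative \<phi>1 (at 0) v) = 0"
        using h l2w1 by (auto simp: zero_prod_def)
      then have "frechet_derivative \<phi>1 (at 0) v = 0" by (simp add: prod_eq_iff)
      then show "v = 0" using A1inj linear_injective_0[OF linp] by blast
    qed
  qed
  have d\<Phi>2: "diffeo_germ \<Phi>2"
  proof (rule smooth_inverse_2d[OF X2(1,2)])
    show "\<Phi>2 0 = 0" unfolding \<Phi>2_def f1_def using A2(9) A1(4) g20 by (simp add: zero_prod_def)
    show "smooth_on X2 \<Phi>2"
      unfolding smooth_on_def \<Phi>2_def f1_def
    proof
      fix k
      have a: "Ck_on k X2 \<gamma>2" "Ck_on k X2 \<phi>2" "Ck_on k U\<psi>1 \<psi>1"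
        using U0(4) A2(8) A1(3) X2 Ck_on_subset unfolding smooth_on_def by blast+
      have b: "Ck_on k U\<psi>1 (\<lambda>q. snd (\<psi>1 q))" by (rule Ck_snd[OF A1(1) a(3)])
      show "Ck_on k X2 (\<lambda>p. (snd (\<phi>2 p), snd (\<psi>1 (\<gamma>2 p))))"
        by (intro Ck_pair Ck_snd X2(1) a(2) Ck_comp[OF X2(1) a(1) X2(5) b])
    qed
    have hg: "(\<gamma>2 has_derivative frechet_derivative \<gamma>2 (at 0)) (at 0)" by (rule smooth_hasd[OF U0(4,2)])
    have hp: "(\<phi>2 has_derivative frechet_derivative \<phi>2 (at 0)) (at 0)" by (rule smooth_hasd[OF A2(8,6)])
    have hd1': "(f1 has_derivative l1) (at (\<gamma>2 0))" using hd1 g20 by simp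
    have hd: "(\<Phi>2 has_derivative (\<lambda>v. (snd (frechet_derivative \<phi>2 (at 0) v), l1 (frechet_derivative \<gamma>2 (at 0) v)))) (at 0)"
      unfolding \<Phi>2_def by (intro has_derivative_Pair has_derivative_compose[OF hg hd1'] has_derivative_snd hp)
    have eq: "frechet_derivative \<Phi>2 (at 0) = (\<lambda>v. (snd (frechet_derivative \<phi>2 (at 0) v), l1 (frechet_derivative \<gamma>2 (at 0) v)))"
      using frechet_derivative_at[OF hd] by simp
    have linp: "linear (frechet_derivative \<phi>2 (at 0))" using hp has_derivative_linear by blast
    show "inj (frechet_derivative \<Phi>2 (at 0))"
      unfolding linear_injective_0[OF has_derivative_linear[OF hd]] eq
    proof (intro allI impI)
      fix v assume h: "(snd (frechet_derivative \<phi>2 (at 0) v), l1 (frechet_derivative \<gamma>2 (at 0) v)) = 0"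
      have "l1 (frechet_derivative \<gamma>2 (at 0) v) = fst (frechet_derivative \<phi>2 (at 0) v) * l1 w2"
        unfolding A2D using linear_cmul[OF lin1] by simp
      then have "fst (frechet_derivative \<phi>2 (at 0) v) = 0" "snd (frechet_derivative \<phi>2 (at 0) v) = 0"
        using h l1w2 by (auto simp: zero_prod_def)
      then have "frechet_derivative \<phi>2 (at 0) v = 0" by (simp add: prod_eq_iff)
      then show "v = 0" using A2inj linear_injective_0[OF linp] by blast
    qed
  qed
  have ev1: "\<forall>\<^sub>F p in nhds 0. \<Psi> (\<gamma>1 p) = fold_x (\<Phi>1 p)"
    unfolding eventually_nhds
  proof (intro exI conjI ballI)
    fix p assume "p \<in> W1"
    then show "\<Psi> (\<gamma>1 p) = fold_x (\<Phi>1 p)"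
      using A1eq[of p] unfolding \<Psi>_def \<Phi>1_def f1_def by (simp add: fold_x_def)
  qed (use A1 in auto)
  have ev2: "\<forall>\<^sub>F p in nhds 0. \<Psi> (\<gamma>2 p) = fold_y (\<Phi>2 p)"
    unfolding eventually_nhds
  proof (intro exI conjI ballI)
    fix p assume "p \<in> W2"
    then show "\<Psi> (\<gamma>2 p) = fold_y (\<Phi>2 p)"
      using A2eq[of p] unfolding \<Psi>_def \<Phi>2_def f2_def by (simp add: fold_x_def fold_y_def)
  qed (use A2 in auto)
  show ?thesis using d\<Phi>1 d\<Phi>2 d\<Psi> ev1 ev2 by blast
qed


end
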